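(* Let $\Gamma=\{f_1,\dots,f_n\}$ be a family of weak weight-functions such that $f_i(x_1,\dots,x_n)\le f_i(x_1+\lambda,\dots,x_n+\lambda)$ for every $i\in\{1,\dots,n\}$, every $\mathbf{x}\in[0,1]^n$ and every $\lambda\in[0,1]$ with $(x_1+\lambda,\dots,x_n+\lambda)\in[0,1]^n$. Then $\mathsf{BGM}_\Gamma$ is a pre-aggregation function which is $(k,\dots,k)$-increasing for every $k>0$.
   Context: A family of weak weight-functions (wFWF) is a family $\Gamma=\{f_i:[0,1]^n\to[0,1]\mid 1\le i\le n\}$ such that (I) $\sum_{i=1}^n f_i(\mathbf{x})\le 1$ for all $\mathbf{x}\in[0,1]^n$ and (II) $\sum_{i=1}^n f_i(1,\dots,1)=1$. The bounded generalized mixture function is $\mathsf{BGM}_\Gamma(\mathbf{x})=\sum_{i=1}^n f_i(\mathbf{x})\,x_i$. For a nonzero $\mathbf{r}\in\mathbb{R}^n$, $F:[0,1]^n\to[0,1]$ is $\mathbf{r}$-increasing if $F(\mathbf{x})\le F(x_1+tr_1,\dots,x_n+tr_n)$ for all $\mathbf{x}\in[0,1]^n$ and $t>0$ with $(x_1+tr_1,\dots,x_n+tr_n)\in[0,1]^n$. $F$ is a pre-aggregation function if $F(0,\dots,0)=0$, $F(1,\dots,1)=1$ and $F$ is $\mathbf{r}$-increasing for some nonzero $\mathbf{r}\in[0,1]^n$. *)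

theory Defs
  imports "HOL-Analysis.Analysis"
begin

text \<open>Points of [0,1]^n are modelled as vectors of type real ^ 'n; the index type 'n
  plays the role of {1..n}.\<close>

definition unit_cube :: "(real ^ 'n) set" where
  "unit_cube = {x. \<forall>i. 0 \<le> x $ i \<and> x $ i \<le> 1}"

definition wFWF :: "('n::finite \<Rightarrow> real ^ 'n \<Rightarrow> real) \<Rightarrow> bool" where
  "wFWF f \<longleftrightarrow>
     (\<forall>i. \<forall>x\<in>unit_cube. 0 \<le> f i x \<and> f i x \<le> 1) \<and>
     (\<forall>x\<in>unit_cube. (\<Sum>i\<in>UNIV. f i x) \<le> 1) \<and>
     (\<Sum>i\<in>UNIV. f i (\<chi> j. 1)) = 1"

definition BGM :: "('n::finite \<Rightarrow> real ^ 'n \<Rightarrow> real) \<Rightarrow> real ^ 'n \<Rightarrow> real" where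
  "BGM f x = (\<Sum>i\<in>UNIV. f i x * x $ i)"

definition r_increasing :: "real ^ 'n \<Rightarrow> (real ^ 'n \<Rightarrow> real) \<Rightarrow> bool" where
  "r_increasing r F \<longleftrightarrow>
     (\<forall>x\<in>unit_cube. \<forall>t::real. t > 0 \<longrightarrow> x + t *\<^sub>R r \<in> unit_cube \<longrightarrow> F x \<le> F (x + t *\<^sub>R r))"

definition pre_aggregation :: "(real ^ 'n \<Rightarrow> real) \<Rightarrow> bool" where
  "pre_aggregation F \<longleftrightarrow>
     (\<forall>x\<in>unit_cube. 0 \<le> F x \<and> F x \<le> 1) \<and>
     F (\<chi> j. 0) = 0 \<and> F (\<chi> j. 1) = 1 \<and>
     (\<exists>r\<in>unit_cube. r \<noteq> 0 \<and> r_increasing r F)"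

end

theory Submission
  imports Defs
begin

theorem proposition10:
  fixes f :: "'n::finite \<Rightarrow> real ^ 'n \<Rightarrow> real"
  assumes "wFWF f"
    and "\<And>i x l. x \<in> unit_cube \<Longrightarrow> 0 \<le> l \<Longrightarrow> l \<le> 1 \<Longrightarrow>
           x + (\<chi> j. l) \<in> unit_cube \<Longrightarrow> f i x \<le> f i (x + (\<chi> j. l))"
  shows "pre_aggregation (BGM f) \<and> (\<forall>k::real. k > 0 \<longrightarrow> r_increasing (\<chi> j. k) (BGM f))"
proof -
  have f01: "\<And>i x. x \<in> unit_cube \<Longrightarrow> 0 \<le> f i x \<and> f i x \<le> 1"
    and fs: "\<And>x. x \<in> unit_cube \<Longrightarrow> (\<Sum>i\<in>UNIV. f i x) \<le> 1"
    and f1: "(\<Sum>i\<in>UNIV. f i (\<chi> j. 1)) = 1"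
    using assms(1) unfolding wFWF_def by auto
  have inc: "r_increasing (\<chi> j. k) (BGM f)" if k: "k > 0" for k
    unfolding r_increasing_def
  proof (intro ballI allI impI)
    fix x :: "real ^ 'n" and t :: real
    assume x: "x \<in> unit_cube" and t: "t > 0" and y: "x + t *\<^sub>R (\<chi> j. k) \<in> unit_cube"
    define l where "l = t * k"
    have eq: "x + t *\<^sub>R (\<chi> j. k) = x + (\<chi> j. l)" by (simp add: vec_eq_iff l_def)
    have l0: "0 \<le> l" using t k by (simp add: l_def)
    have l1: "l \<le> 1"
    proof -
      obtain i :: 'n where True by simp
      have "0 \<le> x $ i" "(x + (\<chi> j. l)) $ i \<le> 1" using x y eq unfolding unit_cube_def by auto
      thus ?thesis by simp
    qed
    have y': "x + (\<chi> j. l) \<in> unit_cube" using y eq by simp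
    have "f i x * x $ i \<le> f i (x + (\<chi> j. l)) * (x + (\<chi> j. l)) $ i" for i
    proof -
      have a: "f i x \<le> f i (x + (\<chi> j. l))" using assms(2) x l0 l1 y' by blast
      have b: "0 \<le> f i x" using f01 x by blast
      have c: "0 \<le> x $ i" using x unfolding unit_cube_def by auto
      have d: "x $ i \<le> (x + (\<chi> j. l)) $ i" using l0 by simp
      show ?thesis using mult_mono[OF a d] b c a by linarith
    qed
    then show "BGM f x \<le> BGM f (x + t *\<^sub>R (\<chi> j. k))"
      unfolding eq BGM_def by (intro sum_mono) auto
  qed
  have rng: "0 \<le> BGM f x \<and> BGM f x \<le> 1" if x: "x \<in> unit_cube" for x
  proof -
    have c: "0 \<le> x $ i \<and> x $ i \<le> 1" for i using x unfolding unit_cube_def by auto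
    have "0 \<le> BGM f x" unfolding BGM_def using f01[OF x] c by (intro sum_nonneg) auto
    moreover have "BGM f x \<le> (\<Sum>i\<in>UNIV. f i x)" unfolding BGM_def
    proof (intro sum_mono)
      fix i show "f i x * x $ i \<le> f i x" using f01[OF x, of i] c[of i]
        by (simp add: mult_left_le)
    qed
    ultimately show ?thesis using fs[OF x] by linarith
  qed
  have cube1: "(\<chi> j. 1) \<in> (unit_cube :: (real^'n) set)" by (simp add: unit_cube_def)
  have ne: "(\<chi> j. 1) \<noteq> (0 :: real ^ 'n)" by (simp add: vec_eq_iff)
  have "BGM f (\<chi> j. 0) = 0" by (simp add: BGM_def)
  moreover have "BGM f (\<chi> j. 1) = 1" using f1 by (simp add: BGM_def)
  ultimately show ?thesis unfolding pre_aggregation_def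
    using rng inc inc[of 1] cube1 ne by auto
qed

end
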